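(* Let $m$ be a positive integer and $k\ge0$. If $\|m\alpha\|\le\|q_k\alpha\|$, then $\mathrm{ab}_\alpha(m)\ge q_{k+1}$. If $\|m\alpha\|\ge\|q_k\alpha\|$, then $\mathrm{ab}_\alpha(m)<q_{k+1}+q_k$.
   Context: $\alpha\in(0,1)$ irrational, $\alpha=[0;a_1,a_2,\ldots]$ with positive integers $a_i$, $a_1\ge2$; $q_{-1}=0$, $q_0=1$, $q_1=a_1$, $q_k=a_kq_{k-1}+q_{k-2}$ ($k\ge2$). $\|x\|$ is the distance from $x$ to the nearest integer. Sturmian words of slope $\alpha$: with $R(\rho)=\{\rho+\alpha\}$ on $[0,1)$ and either $I_0=[0,1-\alpha)$ or $I_0=(0,1-\alpha]$ ($I_1$ its complement), $\mathbf{s}_{\rho,\alpha}$ has $n$-th letter $0$ iff $R^n(\rho)\in I_0$; they share a set $\mathcal{L}_\alpha$ of finite factors. An abelian power of period $m$ and exponent $e$ is a concatenation of $e$ pairwise abelian equivalent words (same numbers of $0$s and $1$s) of length $m$; $\mathrm{ab}_\alpha(m)$ is the maximum exponent of an abelian power of period $m$ in $\mathcal{L}_\alpha$ (it is known that $\mathrm{ab}_\alpha(m)=\lfloor 1/\|m\alpha\|\rfloor$). *)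

theory Defs
  imports Complex_Main
begin

definition dist_int :: "real \<Rightarrow> real" where
  "dist_int x = \<bar>x - of_int (round x)\<bar>"

text \<open>Continued fraction expansion alpha = [0; a_1, a_2, ...] via the Gauss map:
  cf_rest alpha n is the n-th complete remainder (alpha_0 = alpha,
  alpha_{n+1} = frac (1/alpha_n)), and a_{n+1} = floor (1/alpha_n).\<close>
fun cf_rest :: "real \<Rightarrow> nat \<Rightarrow> real" where
  "cf_rest \<alpha> 0 = \<alpha>"
| "cf_rest \<alpha> (Suc n) = frac (1 / cf_rest \<alpha> n)"

definition cf_a :: "real \<Rightarrow> nat \<Rightarrow> nat" where
  "cf_a \<alpha> n = nat \<lfloor>1 / cf_rest \<alpha> (n - 1)\<rfloor>"   (* meaningful for n \<ge> 1 *)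

text \<open>Denominators of convergents: q_0 = 1, q_1 = a_1, q_k = a_k q_{k-1} + q_{k-2}
  (consistent with q_{-1} = 0).\<close>
fun cf_q :: "real \<Rightarrow> nat \<Rightarrow> nat" where
  "cf_q \<alpha> 0 = 1"
| "cf_q \<alpha> (Suc 0) = cf_a \<alpha> 1"
| "cf_q \<alpha> (Suc (Suc k)) = cf_a \<alpha> (k + 2) * cf_q \<alpha> (Suc k) + cf_q \<alpha> k"

text \<open>Sturmian word of slope alpha and intercept rho; b selects the interval:
  b = False: I_0 = [0, 1 - alpha);  b = True: I_0 = (0, 1 - alpha].\<close>
definition in_I0 :: "bool \<Rightarrow> real \<Rightarrow> real \<Rightarrow> bool" where
  "in_I0 b \<alpha> x = (if b then 0 < x \<and> x \<le> 1 - \<alpha> else 0 \<le> x \<and> x < 1 - \<alpha>)"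

definition sturmian :: "bool \<Rightarrow> real \<Rightarrow> real \<Rightarrow> nat \<Rightarrow> nat" where
  "sturmian b \<rho> \<alpha> n = (if in_I0 b \<alpha> (frac (\<rho> + real n * \<alpha>)) then 0 else 1)"

definition sturm_lang :: "real \<Rightarrow> nat list set" where
  "sturm_lang \<alpha> = {w. \<exists>b \<rho> i. 0 \<le> \<rho> \<and> \<rho> < 1 \<and>
      w = map (\<lambda>j. sturmian b \<rho> \<alpha> (i + j)) [0..<length w]}"

definition abelian_power :: "nat list \<Rightarrow> nat \<Rightarrow> nat \<Rightarrow> bool" where
  "abelian_power w m e \<longleftrightarrow> length w = e * m \<and>
     (\<forall>i<e. \<forall>j<e. (\<forall>c::nat. count_list (take m (drop (i * m) w)) c = count_list (take m (drop (j * m) w)) c))"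

definition ab :: "real \<Rightarrow> nat \<Rightarrow> nat" where
  "ab \<alpha> m = (GREATEST e. \<exists>w \<in> sturm_lang \<alpha>. abelian_power w m e)"

end

theory Submission
  imports Defs
begin


definition FF :: "bool \<Rightarrow> real \<Rightarrow> real \<Rightarrow> nat \<Rightarrow> int" where
  "FF b \<rho> \<alpha> n = (if b then \<lceil>\<rho> + real n * \<alpha>\<rceil> else \<lfloor>\<rho> + real n * \<alpha>\<rfloor>)"

lemma letter_FF:
  assumes "0 < \<alpha>" "\<alpha> < 1"
  shows "int (sturmian b \<rho> \<alpha> n) = FF b \<rho> \<alpha> (Suc n) - FF b \<rho> \<alpha> n"
proof -
  define x where "x = \<rho> + real n * \<alpha>"
  have xs: "\<rho> + real (Suc n) * \<alpha> = x + \<alpha>" unfolding x_def by (simp add: algebra_simps)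
  have fl: "\<lfloor>x + \<alpha>\<rfloor> = \<lfloor>x\<rfloor> + (if frac x + \<alpha> < 1 then 0 else 1)"
  proof -
    have "\<lfloor>\<alpha>\<rfloor> = 0" "frac \<alpha> = \<alpha>" using assms by (auto simp: floor_eq_iff frac_eq)
    then show ?thesis using floor_add[of x \<alpha>] by simp
  qed
  show ?thesis
  proof (cases b)
    case False
    then show ?thesis unfolding sturmian_def FF_def in_I0_def x_def[symmetric] xs fl
      using frac_ge_0[of x] by auto
  next
    case True
    have c1: "\<lceil>x\<rceil> = \<lfloor>x\<rfloor> + (if frac x = 0 then 0 else 1)"
    proof (cases "frac x = 0")
      case True
      then have "x \<in> \<int>" by simp
      then obtain z where "x = of_int z" by (auto elim: Ints_cases)
      then show ?thesis using True by simp
    next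
      case False
      then have "real_of_int \<lfloor>x\<rfloor> < x" using of_int_floor_le[of x] unfolding frac_def by (smt (verit))
      have "\<lceil>x\<rceil> = \<lfloor>x\<rfloor> + 1" unfolding ceiling_eq_iff
        using \<open>real_of_int \<lfloor>x\<rfloor> < x\<close> of_int_floor_le[of x] floor_correct[of x] by simp
      then show ?thesis using False by simp
    qed
    have c2: "\<lceil>x + \<alpha>\<rceil> = \<lfloor>x\<rfloor> + (if frac x + \<alpha> \<le> 1 then 1 else 2)"
    proof -
      have "\<lceil>x + \<alpha>\<rceil> = \<lceil>frac x + \<alpha>\<rceil> + \<lfloor>x\<rfloor>"
      proof -
        have "x + \<alpha> = (frac x + \<alpha>) + of_int \<lfloor>x\<rfloor>" by (simp add: frac_def)
        then show ?thesis by (metis ceiling_add_of_int)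
      qed
      moreover have "\<lceil>frac x + \<alpha>\<rceil> = (if frac x + \<alpha> \<le> 1 then 1 else 2)"
      proof -
        have h: "0 \<le> frac x" "frac x < 1" by (auto simp: frac_lt_1)
        show ?thesis
        proof (cases "frac x + \<alpha> \<le> 1")
          case True
          then show ?thesis using h assms by (simp add: ceiling_eq_iff add_nonneg_pos)
        next
          case False
          then show ?thesis using h assms by (simp add: ceiling_eq_iff add_nonneg_pos)
        qed
      qed
      ultimately show ?thesis by simp
    qed
    show ?thesis
    proof (cases "frac x = 0")
      case True
      have "frac x + \<alpha> \<le> 1" using True assms by linarith
      then show ?thesis unfolding sturmian_def FF_def in_I0_def x_def[symmetric] xs c1 c2
        using \<open>b\<close> assms True by (simp del: frac_eq_0_iff)
    next
      case False
      then have "0 < frac x" using frac_ge_0[of x] by linarith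
      then show ?thesis unfolding sturmian_def FF_def in_I0_def x_def[symmetric] xs c1 c2
        using \<open>b\<close> assms False by auto
    qed
  qed
qed

lemma FF_approx:
  "FF b \<rho> \<alpha> n - (\<rho> + real n * \<alpha>) \<in> (if b then {0..<1} else {-1<..0})"
  unfolding FF_def by (auto simp: ceiling_correct) (linarith+)

lemma count01:
  assumes "\<forall>x\<in>set xs. x \<le> (1::nat)"
  shows "count_list xs 1 = sum_list xs \<and> count_list xs 0 + sum_list xs = length xs
     \<and> (\<forall>c>1. count_list xs c = 0)"
  using assms
proof (induction xs)
  case Nil
  then show ?case by simp
next
  case (Cons a xs)
  then have "a = 0 \<or> a = 1" by auto
  then show ?case using Cons by auto
qed

lemma count_eq:
  assumes "\<forall>x\<in>set xs. x \<le> (1::nat)" "\<forall>x\<in>set ys. x \<le> (1::nat)"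
    "length xs = length ys" "sum_list xs = sum_list ys"
  shows "count_list xs c = count_list ys c"
  using count01[OF assms(1)] count01[OF assms(2)] assms(3,4)
  by (metis add_right_imp_eq less_one linorder_neqE_nat)

lemma sturmian_le1: "sturmian b \<rho> \<alpha> n \<le> 1"
  unfolding sturmian_def by auto

lemma block_eq:
  assumes "t < e"
  shows "take m (drop (t * m) (map f [0..<e * m])) = map f [t * m..<t * m + m]"
proof -
  have "t * m + m \<le> e * m" using assms
    by (metis Suc_leI add.commute mult_Suc mult_le_mono1)
  then show ?thesis by (simp add: drop_map take_map min_def)
qed

lemma block_sum:
  assumes "0 < \<alpha>" "\<alpha> < 1"
  shows "int (sum_list (map (\<lambda>j. sturmian b \<rho> \<alpha> (i + j)) [a..<a + m]))
       = FF b \<rho> \<alpha> (i + (a + m)) - FF b \<rho> \<alpha> (i + a)"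
proof -
  have "int (sum_list (map (\<lambda>j. sturmian b \<rho> \<alpha> (i + j)) [a..<a + m]))
      = int (\<Sum>j = a..<a + m. sturmian b \<rho> \<alpha> (i + j))"
    unfolding sum_set_upt_conv_sum_list_nat[symmetric] set_upt by (rule refl)
  also have "\<dots> = (\<Sum>j = a..<a + m. int (sturmian b \<rho> \<alpha> (i + j)))"
    by (rule of_nat_sum)
  also have "\<dots> = (\<Sum>j = a..<a + m. FF b \<rho> \<alpha> (i + Suc j) - FF b \<rho> \<alpha> (i + j))"
    using letter_FF[OF assms] by simp
  also have "\<dots> = FF b \<rho> \<alpha> (i + (a + m)) - FF b \<rho> \<alpha> (i + a)"
    using sum_Suc_diff'[of a "a+m" "\<lambda>j. FF b \<rho> \<alpha> (i + j)"] by simp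
  finally show ?thesis .
qed




lemma upper_bound:
  assumes a: "0 < \<alpha>" "\<alpha> < 1" and w: "w \<in> sturm_lang \<alpha>" and ap: "abelian_power w m e"
  shows "real e * dist_int (real m * \<alpha>) < 1"
proof (cases "e = 0")
  case True
  then show ?thesis by simp
next
  case False
  from w obtain b \<rho> i where wdef: "w = map (\<lambda>j. sturmian b \<rho> \<alpha> (i + j)) [0..<length w]"
    unfolding sturm_lang_def by blast
  have len: "length w = e * m" using ap unfolding abelian_power_def by simp
  define f where "f = (\<lambda>j. sturmian b \<rho> \<alpha> (i + j))"
  have w2: "w = map f [0..<e * m]" using wdef len f_def by simp
  define F where "F = (\<lambda>n. FF b \<rho> \<alpha> (i + n))"
  define c where "c = count_list (take m (drop (0 * m) w)) 1"
  have blk: "int c = F (t * m + m) - F (t * m)" if "t < e" for t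
  proof -
    have "count_list (take m (drop (t * m) w)) 1 = c"
    proof -
      have "\<forall>i<e. \<forall>j<e. \<forall>c::nat. count_list (take m (drop (i * m) w)) c = count_list (take m (drop (j * m) w)) c"
        using ap unfolding abelian_power_def by blast
      then have "count_list (take m (drop (t * m) w)) 1 = count_list (take m (drop (0 * m) w)) 1"
        using that False by blast
      then show ?thesis unfolding c_def .
    qed
    moreover have "take m (drop (t * m) w) = map f [t * m..<t * m + m]"
      unfolding w2 by (rule block_eq[OF that])
    moreover have "int (sum_list (map f [t * m..<t * m + m])) = F (t * m + m) - F (t * m)"
      unfolding f_def F_def using block_sum[OF a, of b \<rho> i "t*m" m] by simp
    moreover have "count_list (map f [t * m..<t * m + m]) 1 = sum_list (map f [t * m..<t * m + m])"
      using count01[of "map f [t * m..<t * m + m]"] sturmian_le1 unfolding f_def by auto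
    ultimately show ?thesis by simp
  qed
  have tel: "F (t * m) - F 0 = int t * int c" if "t \<le> e" for t
    using that
  proof (induction t)
    case 0
    then show ?case by simp
  next
    case (Suc t)
    then have "F (Suc t * m) - F 0 = (F (t * m + m) - F (t * m)) + (F (t * m) - F 0)"
      by (simp add: add.commute)
    also have "\<dots> = int c + int t * int c" using blk[of t] Suc by simp
    finally show ?case by (simp add: algebra_simps)
  qed
  define y where "y = \<rho> + real i * \<alpha>"
  have A1: "F (e * m) - (y + real e * (real m * \<alpha>)) \<in> (if b then {0..<1} else {-1<..0})"
    using FF_approx[of b \<rho> \<alpha> "i + e * m"] unfolding F_def y_def
    by (simp add: algebra_simps)
  have A0: "F 0 - y \<in> (if b then {0..<1} else {-1<..0})"
    using FF_approx[of b \<rho> \<alpha> "i"] unfolding F_def y_def by simp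
  have "\<bar>(F (e * m) - (y + real e * (real m * \<alpha>))) - (F 0 - y)\<bar> < 1"
  proof (cases b)
    case True
    then show ?thesis using A0 A1 by (simp only: if_True atLeastLessThan_iff abs_less_iff) linarith
  next
    case False
    then show ?thesis using A0 A1 by (simp only: if_False greaterThanAtMost_iff abs_less_iff) linarith
  qed
  moreover have "(F (e * m) - (y + real e * (real m * \<alpha>))) - (F 0 - y)
     = real e * (real c - real m * \<alpha>)"
  proof -
    have "real_of_int (F (e * m) - F 0) = real_of_int (int e * int c)" using tel[of e] by simp
    then have "real_of_int (F (e * m)) - real_of_int (F 0) = real e * real c" by simp
    then show ?thesis by (simp add: algebra_simps)
  qed
  ultimately have lt: "real e * \<bar>real m * \<alpha> - real c\<bar> < 1" by (simp add: abs_mult abs_minus_commute)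
  have "dist_int (real m * \<alpha>) \<le> \<bar>real m * \<alpha> - real c\<bar>"
    unfolding dist_int_def using round_diff_minimal[of "real m * \<alpha>" "int c"] by simp
  then have "real e * dist_int (real m * \<alpha>) \<le> real e * \<bar>real m * \<alpha> - real c\<bar>"
    by (simp add: mult_left_mono)
  then show ?thesis using lt by linarith
qed



lemma lower_bound:
  assumes a: "0 < \<alpha>" "\<alpha> < 1" and e: "real e * dist_int (real m * \<alpha>) < 1"
  shows "\<exists>w\<in>sturm_lang \<alpha>. abelian_power w m e"
proof -
  define c where "c = round (real m * \<alpha>)"
  define \<delta> where "\<delta> = real m * \<alpha> - of_int c"
  have dd: "dist_int (real m * \<alpha>) = \<bar>\<delta>\<bar>" unfolding dist_int_def \<delta>_def c_def by simp
  define \<rho> where "\<rho> = max 0 (- real e * \<delta>)"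
  have r0: "0 \<le> \<rho>" unfolding \<rho>_def by simp
  have r1: "\<rho> < 1" unfolding \<rho>_def using e dd
    by (cases "\<delta> \<ge> 0") (auto simp: mult_nonneg_nonneg)
  have Fv: "FF False \<rho> \<alpha> (t * m) = int t * c" if "t \<le> e" for t
  proof -
    have eq: "\<rho> + real (t * m) * \<alpha> = of_int (int t * c) + (\<rho> + real t * \<delta>)"
      unfolding \<delta>_def by (simp add: algebra_simps)
    have b: "0 \<le> \<rho> + real t * \<delta> \<and> \<rho> + real t * \<delta> < 1"
    proof (cases "\<delta> \<ge> 0")
      case True
      then have "\<rho> = 0" unfolding \<rho>_def by (simp add: mult_nonneg_nonneg)
      moreover have "real t * \<delta> \<le> real e * \<delta>" using that True by (simp add: mult_right_mono)
      ultimately show ?thesis using e dd True by simp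
    next
      case False
      then have "\<rho> = - real e * \<delta>" 
      proof -
        have "real e * \<delta> \<le> 0" using False by (simp add: mult_nonneg_nonpos)
        then show ?thesis unfolding \<rho>_def by simp
      qed
      then have "\<rho> + real t * \<delta> = (real e - real t) * (- \<delta>)" by (simp add: algebra_simps)
      moreover have "(real e - real t) * (- \<delta>) \<le> real e * (- \<delta>)" using False by (simp add: mult_right_mono)
      moreover have "0 \<le> (real e - real t) * (- \<delta>)" using False that by (intro mult_nonneg_nonneg) auto
      moreover have "real e * (- \<delta>) < 1" using e dd False by simp
      ultimately show ?thesis by linarith
    qed
    show ?thesis unfolding FF_def using eq b by (simp add: floor_eq_iff)
  qed
  define f where "f = (\<lambda>j. sturmian False \<rho> \<alpha> (0 + j))"
  define w where "w = map f [0..<e * m]"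
  have "w \<in> sturm_lang \<alpha>" unfolding sturm_lang_def
  proof (intro CollectI exI conjI)
    show "w = map (\<lambda>j. sturmian False \<rho> \<alpha> (0 + j)) [0..<length w]"
      unfolding w_def f_def by simp
  qed (use r0 r1 in auto)
  moreover have "abelian_power w m e"
    unfolding abelian_power_def
  proof (intro conjI allI impI)
    show "length w = e * m" unfolding w_def by simp
    have blk: "take m (drop (t * m) w) = map f [t * m..<t * m + m]" if "t < e" for t
      unfolding w_def by (rule block_eq[OF that])
    have sm: "int (sum_list (map f [t * m..<t * m + m])) = c" if "t < e" for t
    proof -
      have "int (sum_list (map f [t * m..<t * m + m])) = FF False \<rho> \<alpha> (0 + (t * m + m)) - FF False \<rho> \<alpha> (0 + t * m)"
        unfolding f_def by (rule block_sum[OF a])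
      also have "\<dots> = int (Suc t) * c - int t * c"
        using Fv[of "Suc t"] Fv[of t] that by (simp add: add.commute)
      finally show ?thesis by (simp add: algebra_simps)
    qed
    fix i j c'
    assume "i < e" "j < e"
    show "count_list (take m (drop (i * m) w)) c' = count_list (take m (drop (j * m) w)) c'"
      unfolding blk[OF \<open>i < e\<close>] blk[OF \<open>j < e\<close>]
      apply (rule count_eq)
      using sturmian_le1 sm[OF \<open>i < e\<close>] sm[OF \<open>j < e\<close>] unfolding f_def by auto
  qed
  ultimately show ?thesis by blast
qed



lemma rest_props:
  assumes "0 < \<alpha>" "\<alpha> < 1" "\<alpha> \<notin> \<rat>"
  shows "0 < cf_rest \<alpha> n \<and> cf_rest \<alpha> n < 1 \<and> cf_rest \<alpha> n \<notin> \<rat>"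
proof (induction n)
  case 0
  then show ?case using assms by simp
next
  case (Suc n)
  define r where "r = cf_rest \<alpha> n"
  have r: "0 < r" "r < 1" "r \<notin> \<rat>" using Suc unfolding r_def by auto
  have i: "1 / r \<notin> \<rat>" using r(3) by (metis Rats_inverse inverse_eq_divide inverse_inverse_eq)
  have fr: "frac (1 / r) = 1 / r - of_int \<lfloor>1 / r\<rfloor>" by (simp add: frac_def)
  have nq: "frac (1 / r) \<notin> \<rat>"
  proof
    assume "frac (1 / r) \<in> \<rat>"
    then have "frac (1 / r) + of_int \<lfloor>1 / r\<rfloor> \<in> \<rat>" by (intro Rats_add) auto
    then show False using i fr by simp
  qed
  have "frac (1 / r) \<noteq> 0" using nq by (metis Rats_0)
  then have "0 < frac (1 / r)" using frac_ge_0[of "1/r"] by linarith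
  then show ?case using nq frac_lt_1 unfolding r_def by simp
qed

lemma a_rel:
  assumes "0 < \<alpha>" "\<alpha> < 1" "\<alpha> \<notin> \<rat>"
  shows "1 / cf_rest \<alpha> k = real (cf_a \<alpha> (Suc k)) + cf_rest \<alpha> (Suc k) \<and> cf_a \<alpha> (Suc k) \<ge> 1"
proof -
  define r where "r = cf_rest \<alpha> k"
  have r: "0 < r" "r < 1" using rest_props[OF assms] unfolding r_def by auto
  have "1 < 1 / r" using r by simp
  then have fl: "1 \<le> \<lfloor>1 / r\<rfloor>" by (simp add: le_floor_iff)
  have "cf_a \<alpha> (Suc k) = nat \<lfloor>1 / r\<rfloor>" unfolding cf_a_def r_def by simp
  moreover have z0: "0 \<le> \<lfloor>1 / r\<rfloor>" using fl by linarith
  ultimately have "real (cf_a \<alpha> (Suc k)) = of_int \<lfloor>1 / r\<rfloor>" "cf_a \<alpha> (Suc k) \<ge> 1"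
    using of_nat_nat[OF z0] fl by (simp, arith)
  then show ?thesis unfolding r_def[symmetric] by (simp add: frac_def r_def)
qed

definition qm :: "real \<Rightarrow> nat \<Rightarrow> nat" where
  "qm \<alpha> k = (if k = 0 then 0 else cf_q \<alpha> (k - 1))"

lemma q_rec: "cf_q \<alpha> (Suc k) = cf_a \<alpha> (Suc k) * cf_q \<alpha> k + qm \<alpha> k"
  by (cases k) (auto simp: qm_def)

lemma q_pos:
  assumes "0 < \<alpha>" "\<alpha> < 1" "\<alpha> \<notin> \<rat>" "cf_a \<alpha> 1 \<ge> 2"
  shows "cf_q \<alpha> k \<ge> 1 \<and> cf_q \<alpha> (Suc k) \<ge> 2"
proof (induction k)
  case 0
  then show ?case using assms by simp
next
  case (Suc k)
  have "cf_a \<alpha> (Suc (Suc k)) \<ge> 1" using a_rel[OF assms(1-3)] by blast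
  then have "cf_a \<alpha> (Suc (Suc k)) * cf_q \<alpha> (Suc k) \<ge> cf_q \<alpha> (Suc k)" by simp
  then show ?case using Suc q_rec[of \<alpha> "Suc k"] by linarith
qed

lemma invariant:
  assumes "0 < \<alpha>" "\<alpha> < 1" "\<alpha> \<notin> \<rat>"
  shows "\<exists>p p' :: int. int (cf_q \<alpha> k) * p' - p * int (qm \<alpha> k) = (-1) ^ k \<and>
     \<alpha> * (real (cf_q \<alpha> k) * (1 / cf_rest \<alpha> k) + real (qm \<alpha> k)) = of_int p * (1 / cf_rest \<alpha> k) + of_int p'"
proof (induction k)
  case 0
  have "\<alpha> * (1 / \<alpha>) = 1" using assms by simp
  show ?case apply (rule exI[of _ "0::int"], rule exI[of _ "1::int"]) using assms by (simp add: qm_def)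
next
  case (Suc k)
  then obtain p p' where h1: "int (cf_q \<alpha> k) * p' - p * int (qm \<alpha> k) = (-1) ^ k"
    and h2: "\<alpha> * (real (cf_q \<alpha> k) * (1 / cf_rest \<alpha> k) + real (qm \<alpha> k)) = of_int p * (1 / cf_rest \<alpha> k) + of_int p'"
    by blast
  define a where "a = cf_a \<alpha> (Suc k)"
  define y where "y = 1 / cf_rest \<alpha> (Suc k)"
  have ypos: "y > 0" using rest_props[OF assms, of "Suc k"] unfolding y_def by (simp del: cf_rest.simps)
  have x: "1 / cf_rest \<alpha> k = real a + 1 / y" using a_rel[OF assms, of k] unfolding a_def y_def by simp
  have qs: "cf_q \<alpha> (Suc k) = a * cf_q \<alpha> k + qm \<alpha> k" "qm \<alpha> (Suc k) = cf_q \<alpha> k"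
    using q_rec[of \<alpha> k] unfolding a_def qm_def by auto
  show ?case
  proof (rule exI[of _ "int a * p + p'"], rule exI[of _ p], rule conjI)
    show "int (cf_q \<alpha> (Suc k)) * p - (int a * p + p') * int (qm \<alpha> (Suc k)) = (-1) ^ Suc k"
      unfolding qs using h1 by (simp add: algebra_simps)
    have "\<alpha> * (real (cf_q \<alpha> (Suc k)) * y + real (qm \<alpha> (Suc k)))
        = y * (\<alpha> * (real (cf_q \<alpha> k) * (real a + 1 / y) + real (qm \<alpha> k)))"
      unfolding qs using ypos by (simp add: field_simps)
    also have "\<dots> = y * (of_int p * (real a + 1 / y) + of_int p')" using h2 x by simp
    also have "\<dots> = of_int (int a * p + p') * y + of_int p" using ypos by (simp add: field_simps)
    finally show "\<alpha> * (real (cf_q \<alpha> (Suc k)) * (1 / cf_rest \<alpha> (Suc k)) + real (qm \<alpha> (Suc k)))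
        = of_int (int a * p + p') * (1 / cf_rest \<alpha> (Suc k)) + of_int p" unfolding y_def .
  qed
qed

lemma dist_q:
  assumes "0 < \<alpha>" "\<alpha> < 1" "\<alpha> \<notin> \<rat>" "cf_a \<alpha> 1 \<ge> 2"
  shows "dist_int (real (cf_q \<alpha> k) * \<alpha>) = 1 / (real (cf_q \<alpha> (Suc k)) + real (cf_q \<alpha> k) * cf_rest \<alpha> (Suc k))"
proof -
  obtain p p' where h1: "int (cf_q \<alpha> k) * p' - p * int (qm \<alpha> k) = (-1) ^ k"
    and h2: "\<alpha> * (real (cf_q \<alpha> k) * (1 / cf_rest \<alpha> k) + real (qm \<alpha> k)) = of_int p * (1 / cf_rest \<alpha> k) + of_int p'"
    using invariant[OF assms(1-3)] by blast
  define q where "q = real (cf_q \<alpha> k)"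
  define x where "x = 1 / cf_rest \<alpha> k"
  define r where "r = cf_rest \<alpha> (Suc k)"
  define Q where "Q = real (cf_q \<alpha> (Suc k)) + q * r"
  have r: "0 < r" "r < 1" using rest_props[OF assms(1-3), of "Suc k"] unfolding r_def by (simp_all del: cf_rest.simps)
  have qp: "q \<ge> 1" "real (cf_q \<alpha> (Suc k)) \<ge> 2" using q_pos[OF assms] unfolding q_def by auto
  have Qg: "Q > 2" unfolding Q_def using qp r by (smt (verit) mult_pos_pos)
  have xQ: "q * x + real (qm \<alpha> k) = Q"
  proof -
    have "x = real (cf_a \<alpha> (Suc k)) + r" using a_rel[OF assms(1-3), of k] unfolding x_def r_def by blast
    moreover have "real (cf_q \<alpha> (Suc k)) = real (cf_a \<alpha> (Suc k)) * q + real (qm \<alpha> k)"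
      using q_rec[of \<alpha> k] unfolding q_def by simp
    ultimately show ?thesis unfolding Q_def by (simp add: algebra_simps)
  qed
  have "(q * \<alpha> - of_int p) * (q * x + real (qm \<alpha> k)) = q * (\<alpha> * (q * x + real (qm \<alpha> k))) - of_int p * (q * x + real (qm \<alpha> k))"
    by (simp add: algebra_simps)
  also have "\<dots> = q * (of_int p * x + of_int p') - of_int p * (q * x + real (qm \<alpha> k))"
    using h2 unfolding q_def x_def by simp
  also have "\<dots> = of_int (int (cf_q \<alpha> k) * p' - p * int (qm \<alpha> k))"
    unfolding q_def by (simp add: algebra_simps)
  also have "\<dots> = (-1) ^ k" using h1 by simp
  finally have "(q * \<alpha> - of_int p) * Q = (-1) ^ k" unfolding xQ .
  then have e: "q * \<alpha> - of_int p = (-1) ^ k / Q" using Qg by (simp add: field_simps)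
  have ab: "\<bar>q * \<alpha> - of_int p\<bar> = 1 / Q" unfolding e using Qg by (simp add: abs_div)
  have "1 / Q < 1 / 2" using Qg by (simp add: divide_strict_left_mono)
  then have "round (q * \<alpha>) = p" using ab by (intro round_unique') simp
  then show ?thesis unfolding dist_int_def using ab unfolding q_def Q_def r_def by simp
qed



theorem lemma3p4:
  fixes \<alpha> :: real and m k :: nat
  assumes "0 < \<alpha>" "\<alpha> < 1" "\<alpha> \<notin> \<rat>"
    and "cf_a \<alpha> 1 \<ge> 2"
    and "0 < m"
  shows "(dist_int (real m * \<alpha>) \<le> dist_int (real (cf_q \<alpha> k) * \<alpha>)
            \<longrightarrow> ab \<alpha> m \<ge> cf_q \<alpha> (k + 1))
       \<and> (dist_int (real m * \<alpha>) \<ge> dist_int (real (cf_q \<alpha> k) * \<alpha>)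
            \<longrightarrow> ab \<alpha> m < cf_q \<alpha> (k + 1) + cf_q \<alpha> k)"
proof -
  define P where "P = (\<lambda>e. \<exists>w \<in> sturm_lang \<alpha>. abelian_power w m e)"
  have abP: "ab \<alpha> m = Greatest P" unfolding ab_def P_def by simp
  define d where "d = dist_int (real m * \<alpha>)"
  have d0: "d > 0"
  proof (rule ccontr)
    assume "\<not> d > 0"
    then have "d = 0" unfolding d_def dist_int_def by simp
    then have "real m * \<alpha> = of_int (round (real m * \<alpha>))" unfolding d_def dist_int_def by simp
    then have "\<alpha> = of_int (round (real m * \<alpha>)) / real m" using assms(5) by (simp add: field_simps)
    then have "\<alpha> \<in> \<rat>" by (metis Rats_divide Rats_of_int Rats_of_nat)
    then show False using assms(3) by simp
  qed
  have Pb: "e * d < 1" if "P e" for e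
    using upper_bound[OF assms(1,2)] that unfolding P_def d_def by blast
  have bound: "y \<le> nat \<lceil>1 / d\<rceil>" if "P y" for y
  proof -
    have "real y < 1 / d" using Pb[OF that] d0 by (simp add: field_simps)
    then show ?thesis by linarith
  qed
  have P0: "P 0" unfolding P_def using lower_bound[OF assms(1,2), of 0 m] by simp
  define Q where "Q = real (cf_q \<alpha> (Suc k)) + real (cf_q \<alpha> k) * cf_rest \<alpha> (Suc k)"
  have dq: "dist_int (real (cf_q \<alpha> k) * \<alpha>) = 1 / Q" using dist_q[OF assms(1-4), of k] unfolding Q_def .
  have r: "0 < cf_rest \<alpha> (Suc k)" "cf_rest \<alpha> (Suc k) < 1"
    using rest_props[OF assms(1-3), of "Suc k"] by (simp_all del: cf_rest.simps)
  have qp: "real (cf_q \<alpha> k) \<ge> 1" using q_pos[OF assms(1-4), of k] by simp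
  have Qlo: "real (cf_q \<alpha> (Suc k)) < Q" unfolding Q_def using qp r by (simp add: mult_pos_pos)
  have Qhi: "Q < real (cf_q \<alpha> (Suc k)) + real (cf_q \<alpha> k)" unfolding Q_def using qp r
    by (simp add: mult_strict_left_mono)
  have Qpos: "Q > 0" using Qlo by linarith
  show ?thesis
  proof (intro conjI impI)
    assume "dist_int (real m * \<alpha>) \<le> dist_int (real (cf_q \<alpha> k) * \<alpha>)"
    then have "d \<le> 1 / Q" unfolding d_def dq .
    then have "real (cf_q \<alpha> (k + 1)) * d \<le> real (cf_q \<alpha> (Suc k)) * (1 / Q)"
      using mult_left_mono[of d "1 / Q" "real (cf_q \<alpha> (Suc k))"] by simp
    also have "\<dots> < 1" using Qlo Qpos by (simp add: field_simps)
    finally have "P (cf_q \<alpha> (k + 1))" unfolding P_def d_def by (rule lower_bound[OF assms(1,2)])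
    then show "ab \<alpha> m \<ge> cf_q \<alpha> (k + 1)" unfolding abP by (rule Greatest_le_nat) (rule bound)
  next
    assume "dist_int (real m * \<alpha>) \<ge> dist_int (real (cf_q \<alpha> k) * \<alpha>)"
    then have dd: "d \<ge> 1 / Q" unfolding d_def dq .
    have "P (ab \<alpha> m)" unfolding abP using P0 by (rule GreatestI_nat) (rule bound)
    then have "real (ab \<alpha> m) * d < 1" by (rule Pb)
    moreover have "real (ab \<alpha> m) * (1 / Q) \<le> real (ab \<alpha> m) * d" using mult_left_mono[OF dd, of "real (ab \<alpha> m)"] by simp
    ultimately have "real (ab \<alpha> m) * (1 / Q) < 1" by linarith
    then have "real (ab \<alpha> m) < Q" using Qpos by (simp add: field_simps)
    then have "real (ab \<alpha> m) < real (cf_q \<alpha> (k + 1) + cf_q \<alpha> k)" using Qhi by simp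
    then show "ab \<alpha> m < cf_q \<alpha> (k + 1) + cf_q \<alpha> k" by linarith
  qed
qed

end
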